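(* If $r \geq 3$ and $t \geq 1$ are integers, then \[ \mathrm{ex}_r\bigl(n, \{C_2, C_3, K_{2,t+1}\}\bigr) \leq \frac{\sqrt{t}}{r(r-1)}\, n^{3/2} + \frac{n}{r}. \]
   Context: Let $G$ be a multigraph and $\mathcal{F}$ a hypergraph. $\mathcal{F}$ is a Berge-$G$ if there is a bijection $f: E(G) \to E(\mathcal{F})$ with $e \subseteq f(e)$ for every $e \in E(G)$. For a family $\mathcal{G}$ of multigraphs, a hypergraph $\mathcal{H}$ is $\mathcal{G}$-free if for every $G \in \mathcal{G}$, $\mathcal{H}$ contains no subhypergraph isomorphic to a Berge-$G$. $\mathrm{ex}_r(n,\mathcal{G})$ denotes the maximum number of edges in an $n$-vertex $r$-uniform $\mathcal{G}$-free hypergraph. $C_2$ is the multigraph consisting of two vertices joined by two parallel edges (so $C_2$-free means linear), $C_3$ is the triangle, and $K_{2,t+1}$ is the complete bipartite graph with parts of sizes $2$ and $t+1$. *)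

theory Defs
  imports Complex_Main
begin

text \<open>A (loopless) multigraph is given by a set of edge identifiers together with
  an endpoint map assigning to each edge identifier its 2-element set of endpoints.
  Parallel edges are distinct identifiers with the same endpoints. Vertices are
  naturals; the vertex set is the union of the endpoint sets (no isolated vertices
  are needed here).\<close>
type_synonym mgraph = "nat set \<times> (nat \<Rightarrow> nat set)"

definition mg_edges :: "mgraph \<Rightarrow> nat set" where "mg_edges G = fst G"
definition mg_ends :: "mgraph \<Rightarrow> nat \<Rightarrow> nat set" where "mg_ends G = snd G"
definition mg_verts :: "mgraph \<Rightarrow> nat set" where
  "mg_verts G = (\<Union>e\<in>mg_edges G. mg_ends G e)"

definition contains_berge :: "'a set set \<Rightarrow> mgraph \<Rightarrow> bool" where
  "contains_berge H G \<longleftrightarrow>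
     (\<exists>(\<phi>::nat \<Rightarrow> 'a) (\<psi>::nat \<Rightarrow> 'a set).
        inj_on \<phi> (mg_verts G) \<and> inj_on \<psi> (mg_edges G) \<and>
        (\<forall>e\<in>mg_edges G. \<psi> e \<in> H \<and> \<phi> ` (mg_ends G e) \<subseteq> \<psi> e))"

definition family_free :: "'a set set \<Rightarrow> mgraph set \<Rightarrow> bool" where
  "family_free H \<G> \<longleftrightarrow> (\<forall>G\<in>\<G>. \<not> contains_berge H G)"

definition uniform_hypergraph :: "nat \<Rightarrow> 'a set \<Rightarrow> 'a set set \<Rightarrow> bool" where
  "uniform_hypergraph r V H \<longleftrightarrow> (\<forall>e\<in>H. e \<subseteq> V \<and> card e = r)"

definition ex_r :: "nat \<Rightarrow> nat \<Rightarrow> mgraph set \<Rightarrow> nat" where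
  "ex_r r n \<G> = Max {card H | H :: nat set set.
      uniform_hypergraph r {..<n} H \<and> family_free H \<G>}"

definition C2 :: mgraph where "C2 = ({0, 1}, \<lambda>e. {0, 1})"

definition C3 :: mgraph where
  "C3 = ({0, 1, 2}, \<lambda>e. if e = 0 then {0, 1} else if e = 1 then {1, 2} else {0, 2})"

text \<open>K_{2,m}: parts {0,1} and {2,..,m+1}; edge identifier e < 2m joins
  e mod 2 and e div 2 + 2.\<close>
definition K2 :: "nat \<Rightarrow> mgraph" where
  "K2 m = ({..<2 * m}, \<lambda>e. {e mod 2, e div 2 + 2})"

end

theory Submission
  imports Defs
begin

lemma cs_sum:
  fixes f :: "'b \<Rightarrow> real"
  assumes "finite A"
  shows "(\<Sum>v\<in>A. f v)^2 \<le> real (card A) * (\<Sum>v\<in>A. f v ^ 2)"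
proof -
  define D where "D = (\<Sum>v\<in>A. f v)"
  define Q where "Q = (\<Sum>v\<in>A. f v ^ 2)"
  have "0 \<le> (\<Sum>v\<in>A. \<Sum>w\<in>A. (f v - f w)^2)" by (intro sum_nonneg) auto
  also have "\<dots> = (\<Sum>v\<in>A. \<Sum>w\<in>A. (f v ^2 + f w ^2 - 2 * f v * f w))"
    by (simp add: power2_diff)
  also have "\<dots> = (\<Sum>v\<in>A. real (card A) * f v ^2 + Q - 2 * f v * D)"
    unfolding Q_def D_def by (simp add: sum.distrib sum_subtractf sum_distrib_left)
  also have "\<dots> = 2 * real (card A) * Q - 2 * D^2"
    unfolding sum.distrib sum_subtractf
    by (simp add: Q_def D_def sum_distrib_left sum_distrib_right power2_eq_square mult.assoc mult.commute[of "f _" "f _"])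
  finally show ?thesis unfolding D_def Q_def by simp
qed
lemma linear_of:
  assumes "\<not> contains_berge H C2" "h1\<in>H" "h2\<in>H" "x\<in>h1" "y\<in>h1" "x\<in>h2" "y\<in>h2" "x\<noteq>y"
  shows "h1 = h2"
proof (rule ccontr)
  assume ne: "h1 \<noteq> h2"
  have "contains_berge H C2" unfolding contains_berge_def
    apply (rule exI[of _ "\<lambda>i. if i=0 then x else y"], rule exI[of _ "\<lambda>i. if i=0 then h1 else h2"])
    using assms ne by (auto simp: C2_def mg_verts_def mg_edges_def mg_ends_def inj_on_def)
  thus False using assms(1) by simp
qed
lemma tri_of:
  assumes "\<not> contains_berge H C3" "a\<noteq>b" "b\<noteq>c" "a\<noteq>c"
    "h0\<in>H" "h1\<in>H" "h2\<in>H" "h0\<noteq>h1" "h1\<noteq>h2" "h0\<noteq>h2"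
    "a\<in>h0" "b\<in>h0" "b\<in>h1" "c\<in>h1" "a\<in>h2" "c\<in>h2"
  shows False
proof -
  have "contains_berge H C3" unfolding contains_berge_def
    apply (rule exI[of _ "\<lambda>i. if i=0 then a else if i=1 then b else c"],
           rule exI[of _ "\<lambda>i. if i=0 then h0 else if i = 1 then h1 else h2"])
    using assms by (auto simp: C3_def mg_verts_def mg_edges_def mg_ends_def inj_on_def)
  thus False using assms(1) by simp
qed
lemma k_of:
  assumes "\<not> contains_berge H (K2 (t+1))" "x\<noteq>y" "inj_on g {..<t+1}"
    "\<forall>i<t+1. g i \<noteq> x \<and> g i \<noteq> y"
    "\<forall>i<t+1. A i \<in> H \<and> B i \<in> H \<and> x \<in> A i \<and> g i \<in> A i \<and> y \<in> B i \<and> g i \<in> B i"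
    "\<forall>i<t+1. \<forall>j<t+1. i\<noteq>j \<longrightarrow> A i \<noteq> A j"
    "\<forall>i<t+1. \<forall>j<t+1. i\<noteq>j \<longrightarrow> B i \<noteq> B j"
    "\<forall>i<t+1. \<forall>j<t+1. A i \<noteq> B j"
  shows False
proof -
  define \<phi> where "\<phi> = (\<lambda>k::nat. if k=0 then x else if k=1 then y else g (k-2))"
  define \<psi> where "\<psi> = (\<lambda>e::nat. if even e then A (e div 2) else B (e div 2))"
  have V: "mg_verts (K2 (t+1)) \<subseteq> {..<t+3}"
    by (auto simp: K2_def mg_verts_def mg_edges_def mg_ends_def)
  have gxy: "\<phi> k \<noteq> x \<and> \<phi> k \<noteq> y" if "k < t+3" "\<not> k < 2" for k
  proof -
    have "k - 2 < t+1" using that by simp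
    then show ?thesis using assms(4) that by (auto simp: \<phi>_def)
  qed
  have i1: "inj_on \<phi> {..<t+3}"
  proof (rule inj_onI)
    fix k1 k2 assume k: "k1 \<in> {..<t+3}" "k2 \<in> {..<t+3}" "\<phi> k1 = \<phi> k2"
    show "k1 = k2"
    proof (cases "k1 < 2")
      case True
      then show ?thesis using k assms(2) gxy[of k2] by (auto simp: \<phi>_def split: if_splits)
    next
      case False
      show ?thesis
      proof (cases "k2 < 2")
        case True
        then show ?thesis using k assms(2) gxy[of k1] False by (auto simp: \<phi>_def split: if_splits)
      next
        case F2: False
        have "g (k1-2) = g (k2-2)" using k False F2 by (simp add: \<phi>_def)
        moreover have "k1 - 2 \<in> {..<t+1}" "k2 - 2 \<in> {..<t+1}" using k by auto
        ultimately have "k1 - 2 = k2 - 2" using assms(3) by (meson inj_onD)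
        then show ?thesis using False F2 by simp
      qed
    qed
  qed
  have i2: "inj_on \<psi> (mg_edges (K2 (t+1)))"
  proof (rule inj_onI)
    fix e1 e2 assume e: "e1 \<in> mg_edges (K2 (t+1))" "e2 \<in> mg_edges (K2 (t+1))" "\<psi> e1 = \<psi> e2"
    have l: "e1 div 2 < t+1" "e2 div 2 < t+1" using e by (auto simp: K2_def mg_edges_def)
    show "e1 = e2"
    proof (cases "even e1"; cases "even e2")
      assume "even e1" "even e2"
      then have "e1 div 2 = e2 div 2" using e l assms(6) by (auto simp: \<psi>_def)
      then show ?thesis using \<open>even e1\<close> \<open>even e2\<close> by (metis dvd_mult_div_cancel)
    next
      assume "odd e1" "odd e2"
      then have "e1 div 2 = e2 div 2" using e l assms(7) by (auto simp: \<psi>_def)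
      then show ?thesis using \<open>odd e1\<close> \<open>odd e2\<close> by (metis odd_two_times_div_two_succ)
    next
      assume "even e1" "odd e2" then show ?thesis using e l assms(8) by (auto simp: \<psi>_def)
    next
      assume "odd e1" "even e2" then show ?thesis using e l assms(8) by (metis \<psi>_def)
    qed
  qed
  have "contains_berge H (K2 (t+1))" unfolding contains_berge_def
  proof (intro exI conjI ballI)
    show "inj_on \<phi> (mg_verts (K2 (t+1)))" using inj_on_subset[OF i1 V] .
    show "inj_on \<psi> (mg_edges (K2 (t+1)))" by (rule i2)
    fix e assume e: "e \<in> mg_edges (K2 (t+1))"
    have l: "e div 2 < t+1" using e by (auto simp: K2_def mg_edges_def)
    show "\<psi> e \<in> H" using assms(5) l by (auto simp: \<psi>_def)
    show "\<phi> ` mg_ends (K2 (t+1)) e \<subseteq> \<psi> e"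
      using assms(5) l by (auto simp: \<psi>_def \<phi>_def K2_def mg_ends_def elim: oddE)
  qed
  thus False using assms(1) by simp
qed
lemma hub:
  assumes "\<not> contains_berge H C3"
    and lin: "\<forall>h1\<in>H. \<forall>h2\<in>H. \<forall>x y. x\<in>h1 \<and> y\<in>h1 \<and> x\<in>h2 \<and> y\<in>h2 \<and> x\<noteq>y \<longrightarrow> h1=h2"
    and "a\<in>H" "bA\<in>H" "bB\<in>H" "p\<in>a" "qA\<in>a" "qB\<in>a" "z\<in>bA" "qA\<in>bA" "z\<in>bB" "qB\<in>bB"
    "qA\<noteq>qB" "qA\<noteq>z" "qB\<noteq>z" and nc: "\<not>(\<exists>h\<in>H. p\<in>h \<and> z\<in>h)"
  shows False
proof -
  have "a \<noteq> bA" "a \<noteq> bB" using nc assms by auto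
  moreover have "bA \<noteq> bB"
  proof
    assume "bA = bB"
    then have "a = bA" using lin assms by blast
    then show False using \<open>a \<noteq> bA\<close> by simp
  qed
  ultimately show False
    using tri_of[OF assms(1), of qA qB z a bB bA] assms by auto
qed

lemma real_final:
  fixes R n D Q t :: real
  assumes R: "R > 0" and n: "n \<ge> 0" and D: "D \<ge> 0" and t: "t \<ge> 0"
    and h1: "R^2 * (Q - D) \<le> t * n^2" and h2: "D^2 \<le> n * Q"
  shows "D - n \<le> sqrt t * (n * sqrt n) / R"
proof (cases "D \<le> n")
  case True
  have "0 \<le> sqrt t * (n * sqrt n) / R" using R n t by simp
  then show ?thesis using True by linarith
next
  case False
  define X where "X = D - n"
  have X: "X > 0" using False X_def by simp
  have "R^2 * (D^2 - n * D) \<le> n * (R^2 * (Q - D))"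
    using h2 R n by (simp add: algebra_simps)
  also have "\<dots> \<le> n * (t * n^2)" using h1 n by (simp add: mult_left_mono)
  finally have A: "R^2 * (D^2 - n * D) \<le> t * n^3" by (simp add: power2_eq_square power3_eq_cube algebra_simps)
  have "X^2 \<le> D^2 - n*D" using X n unfolding X_def by (simp add: power2_eq_square algebra_simps mult_right_mono)
  then have "R^2 * X^2 \<le> R^2 * (D^2 - n*D)" using R by (simp add: mult_left_mono)
  with A have "(R*X)^2 \<le> t * n^3" by (simp add: power_mult_distrib)
  then have "R * X \<le> sqrt (t * n^3)" by (rule real_le_rsqrt)
  also have "sqrt (t * n^3) = sqrt t * (n * sqrt n)"
    using n by (simp add: real_sqrt_mult power3_eq_cube real_sqrt_mult_self)
  finally show ?thesis using R unfolding X_def by (simp add: field_simps)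
qed
lemma main_bound:
  fixes r t n :: nat and H :: "nat set set"
  assumes r: "r \<ge> 3" and t: "t \<ge> 1" and U: "uniform_hypergraph r {..<n} H"
    and F: "family_free H {C2, C3, K2 (t+1)}"
  shows "real (card H)
           \<le> sqrt (real t) / (real r * (real r - 1)) * real n powr (3 / 2) + real n / real r"
proof -
  have nC2: "\<not> contains_berge H C2" and nC3: "\<not> contains_berge H C3"
    and nK: "\<not> contains_berge H (K2 (t+1))" using F by (auto simp: family_free_def)
  have Hs: "\<And>h. h\<in>H \<Longrightarrow> h \<subseteq> {..<n} \<and> card h = r" using U by (auto simp: uniform_hypergraph_def)
  have finH: "finite H"
    by (rule finite_subset[of _ "Pow {..<n}"]) (use Hs in auto)
  have finh: "\<And>h. h\<in>H \<Longrightarrow> finite h" using Hs finite_subset by blast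
  have lin: "\<And>h1 h2 x y. \<lbrakk>h1\<in>H; h2\<in>H; x\<in>h1; y\<in>h1; x\<in>h2; y\<in>h2; x\<noteq>y\<rbrakk> \<Longrightarrow> h1=h2"
    using linear_of[OF nC2] by blast
  have linA: "\<forall>h1\<in>H. \<forall>h2\<in>H. \<forall>x y. x\<in>h1 \<and> y\<in>h1 \<and> x\<in>h2 \<and> y\<in>h2 \<and> x\<noteq>y \<longrightarrow> h1=h2"
    using lin by blast
  define S where "S = {(v,x,y). \<exists>h1\<in>H. \<exists>h2\<in>H. h1\<noteq>h2 \<and> v\<in>h1 \<and> x\<in>h1 \<and> v\<in>h2 \<and> y\<in>h2 \<and> x\<noteq>v \<and> y\<noteq>v}"
  define W where "W x y = {v. (v,x,y)\<in>S}" for x y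
  have Ssub: "S \<subseteq> {..<n} \<times> {..<n} \<times> {..<n}" unfolding S_def using Hs by fastforce
  have finS: "finite S" by (rule finite_subset[OF Ssub]) auto
  have finW: "finite (W x y)" for x y
    by (rule finite_subset[of _ "{..<n}"]) (use Ssub in \<open>auto simp: W_def\<close>)
  have key: "card (W x y) \<le> t" for x y
  proof (rule ccontr)
    assume "\<not> card (W x y) \<le> t"
    then have "t+1 \<le> card (W x y)" by simp
    then obtain Z where Z: "Z \<subseteq> W x y" "card Z = t+1"
      by (meson obtain_subset_with_card_n)
    have finZ: "finite Z" using Z finW finite_subset by blast
    obtain g where g: "bij_betw g {0..<t+1} Z" using ex_bij_betw_nat_finite[OF finZ] Z(2) by auto
    have ginj: "inj_on g {..<t+1}" using g by (simp add: bij_betw_def atLeast0LessThan)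
    have gW: "g i \<in> W x y" if "i < t+1" for i using g Z that by (auto simp: bij_betw_def)
    have "g 0 \<in> W x y" using gW by simp
    then obtain v h1 h2 where vh: "h1\<in>H" "h2\<in>H" "h1\<noteq>h2" "v\<in>h1" "x\<in>h1" "v\<in>h2" "y\<in>h2" "x\<noteq>v" "y\<noteq>v"
      unfolding W_def S_def by auto
    have xy: "x \<noteq> y" using vh lin by metis
    have nc: "\<not>(\<exists>h\<in>H. x\<in>h \<and> y\<in>h)"
    proof
      assume "\<exists>h\<in>H. x\<in>h \<and> y\<in>h"
      then obtain h3 where h3: "h3\<in>H" "x\<in>h3" "y\<in>h3" by blast
      have "h1 \<noteq> h3" using lin[of h1 h2 v y] vh h3 by auto
      moreover have "h2 \<noteq> h3" using lin[of h1 h2 v x] vh h3 by auto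
      ultimately show False using tri_of[OF nC3, of v x y h1 h3 h2] vh h3 xy by auto
    qed
    have ex: "\<forall>i. \<exists>p. i < t+1 \<longrightarrow> (fst p \<in> H \<and> snd p \<in> H \<and> x \<in> fst p \<and> g i \<in> fst p \<and> y \<in> snd p \<and> g i \<in> snd p \<and> g i \<noteq> x \<and> g i \<noteq> y)"
    proof
      fix i
      show "\<exists>p. i < t+1 \<longrightarrow> (fst p \<in> H \<and> snd p \<in> H \<and> x \<in> fst p \<and> g i \<in> fst p \<and> y \<in> snd p \<and> g i \<in> snd p \<and> g i \<noteq> x \<and> g i \<noteq> y)"
      proof (cases "i < t+1")
        case True
        then have "g i \<in> W x y" by (rule gW)
        then obtain a b where "a\<in>H" "b\<in>H" "g i \<in> a" "x \<in> a" "g i \<in> b" "y\<in>b" "x \<noteq> g i" "y \<noteq> g i"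
          unfolding W_def S_def by auto
        then show ?thesis by (intro exI[of _ "(a,b)"]) auto
      qed auto
    qed
    from choice[OF ex] obtain AB where AB: "\<forall>i. i < t+1 \<longrightarrow> (fst (AB i) \<in> H \<and> snd (AB i) \<in> H \<and> x \<in> fst (AB i) \<and> g i \<in> fst (AB i) \<and> y \<in> snd (AB i) \<and> g i \<in> snd (AB i) \<and> g i \<noteq> x \<and> g i \<noteq> y)"
      by blast
    define A where "A i = fst (AB i)" for i
    define B where "B i = snd (AB i)" for i
    have ABi: "\<forall>i<t+1. A i \<in> H \<and> B i \<in> H \<and> x \<in> A i \<and> g i \<in> A i \<and> y \<in> B i \<and> g i \<in> B i"
      using AB by (auto simp: A_def B_def)
    have gxy: "\<forall>i<t+1. g i \<noteq> x \<and> g i \<noteq> y" using AB by auto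
    have gij: "g i \<noteq> g j" if "i<t+1" "j<t+1" "i\<noteq>j" for i j
      using ginj that by (auto simp: inj_on_def)
    have nc': "\<not>(\<exists>h\<in>H. y\<in>h \<and> x\<in>h)" using nc by blast
    have Aij: "\<forall>i<t+1. \<forall>j<t+1. i\<noteq>j \<longrightarrow> A i \<noteq> A j"
    proof (intro allI impI)
      fix i j assume ij: "i<t+1" "j<t+1" "i\<noteq>j"
      show "A i \<noteq> A j"
      proof
        assume e: "A i = A j"
        show False
          using hub[OF nC3 linA, where a="A i" and bA="B i" and bB="B j" and p=x and qA="g i" and qB="g j" and z=y] ABi ij e gij[OF ij] gxy nc by auto
      qed
    qed
    have Bij: "\<forall>i<t+1. \<forall>j<t+1. i\<noteq>j \<longrightarrow> B i \<noteq> B j"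
    proof (intro allI impI)
      fix i j assume ij: "i<t+1" "j<t+1" "i\<noteq>j"
      show "B i \<noteq> B j"
      proof
        assume e: "B i = B j"
        show False
          using hub[OF nC3 linA, where a="B i" and bA="A i" and bB="A j" and p=y and qA="g i" and qB="g j" and z=x] ABi ij e gij[OF ij] gxy nc' by auto
      qed
    qed
    have ABij: "\<forall>i<t+1. \<forall>j<t+1. A i \<noteq> B j" using ABi nc by metis
    show False using k_of[OF nK xy ginj gxy ABi Aij Bij ABij] .
  qed
  have up: "card S \<le> n * n * t"
  proof -
    have "S \<subseteq> (\<Union>p\<in>{..<n}\<times>{..<n}. (\<lambda>v. (v, fst p, snd p)) ` W (fst p) (snd p))"
      using Ssub unfolding W_def by force
    then have "card S \<le> card (\<Union>p\<in>{..<n}\<times>{..<n}. (\<lambda>v. (v, fst p, snd p)) ` W (fst p) (snd p))"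
      by (rule card_mono[rotated]) (auto intro: finW)
    also have "\<dots> \<le> (\<Sum>p\<in>{..<n}\<times>{..<n}. card ((\<lambda>v. (v, fst p, snd p)) ` W (fst p) (snd p)))"
      by (rule card_UN_le) auto
    also have "\<dots> \<le> (\<Sum>p\<in>{..<n}\<times>{..<n}. t)"
      by (intro sum_mono order_trans[OF card_image_le key] finW)
    also have "\<dots> = n * n * t" by simp
    finally show ?thesis .
  qed
  define d where "d v = card {h\<in>H. v\<in>h}" for v
  define Sv where "Sv v = {p\<in>S. fst p = v}" for v
  have per: "d v * ((d v - 1) * ((r - 1) * (r - 1))) \<le> card (Sv v)" for v
  proof -
    define Hv where "Hv = {h\<in>H. v\<in>h}"
    have finHv: "finite Hv" using finH by (simp add: Hv_def)
    define T where "T = (SIGMA h1:Hv. SIGMA h2:(Hv - {h1}). (h1 - {v}) \<times> (h2 - {v}))"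
    have cT: "card T = d v * ((d v - 1) * ((r - 1) * (r - 1)))"
    proof -
      have c1: "card (h - {v}) = r - 1" if "h \<in> Hv" for h
        using that Hs finh by (simp add: Hv_def)
      have "card T = (\<Sum>h1\<in>Hv. \<Sum>h2\<in>Hv - {h1}. card (h1 - {v}) * card (h2 - {v}))"
      proof -
        have fh: "finite h" if "h \<in> Hv" for h using that finh by (simp add: Hv_def)
        have "card T = (\<Sum>h1\<in>Hv. card (SIGMA h2:(Hv - {h1}). (h1 - {v}) \<times> (h2 - {v})))"
          unfolding T_def by (rule card_SigmaI) (use finHv fh in auto)
        also have "\<dots> = (\<Sum>h1\<in>Hv. \<Sum>h2\<in>Hv - {h1}. card ((h1 - {v}) \<times> (h2 - {v})))"
          by (intro sum.cong refl card_SigmaI) (use finHv fh in auto)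
        finally show ?thesis by (simp add: card_cartesian_product)
      qed
      also have "\<dots> = (\<Sum>h1\<in>Hv. \<Sum>h2\<in>Hv - {h1}. (r - 1) * (r - 1))"
        by (intro sum.cong refl) (auto simp: c1)
      also have "\<dots> = (\<Sum>h1\<in>Hv. (d v - 1) * ((r - 1) * (r - 1)))"
        by (intro sum.cong refl) (simp add: card_Diff_singleton finHv d_def Hv_def)
      also have "\<dots> = d v * ((d v - 1) * ((r - 1) * (r - 1)))"
        by (simp add: d_def Hv_def)
      finally show ?thesis .
    qed
    define f where "f = (\<lambda>(q::nat set \<times> nat set \<times> nat \<times> nat). (v, snd (snd q)))"
    have injf: "inj_on f T"
    proof (rule inj_onI)
      fix q1 q2 assume q: "q1 \<in> T" "q2 \<in> T" "f q1 = f q2"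
      obtain a1 b1 x1 y1 where q1: "q1 = (a1,b1,x1,y1)" by (cases q1) auto
      obtain a2 b2 x2 y2 where q2: "q2 = (a2,b2,x2,y2)" by (cases q2) auto
      have e: "x1 = x2" "y1 = y2" using q q1 q2 by (auto simp: f_def)
      have "a1 = a2" using lin[of a1 a2 v x1] q q1 q2 e by (auto simp: T_def Hv_def)
      moreover have "b1 = b2" using lin[of b1 b2 v y1] q q1 q2 e by (auto simp: T_def Hv_def)
      ultimately show "q1 = q2" using q1 q2 e by simp
    qed
    have "f ` T \<subseteq> Sv v"
      unfolding f_def T_def Sv_def S_def Hv_def by force
    then have "card (f ` T) \<le> card (Sv v)"
      by (rule card_mono[rotated]) (use finS in \<open>auto simp: Sv_def\<close>)
    then show ?thesis using card_image[OF injf] cT by simp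
  qed
  have low: "(\<Sum>v<n. d v * ((d v - 1) * ((r - 1) * (r - 1)))) \<le> card S"
  proof -
    have "(\<Sum>v<n. d v * ((d v - 1) * ((r - 1) * (r - 1)))) \<le> (\<Sum>v<n. card (Sv v))"
      by (intro sum_mono per)
    also have "\<dots> = card (\<Union>v<n. Sv v)"
      by (rule card_UN_disjoint[symmetric]) (use finS in \<open>auto simp: Sv_def\<close>)
    also have "\<dots> \<le> card S"
      by (rule card_mono[OF finS]) (auto simp: Sv_def)
    finally show ?thesis .
  qed
  have dc: "(\<Sum>v<n. d v) = r * card H"
  proof -
    have "(\<Sum>v<n. d v) = (\<Sum>v<n. \<Sum>h\<in>H. if v \<in> h then 1 else 0)"
      unfolding d_def using finH by (simp add: sum.If_cases Int_def)
    also have "\<dots> = (\<Sum>h\<in>H. \<Sum>v<n. if v \<in> h then 1 else 0)" by (rule sum.swap)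
    also have "\<dots> = (\<Sum>h\<in>H. r)"
    proof (intro sum.cong refl)
      fix h assume h: "h \<in> H"
      have "(\<Sum>v<n. if v \<in> h then 1 else 0) = card ({..<n} \<inter> h)"
        by (simp add: sum.If_cases)
      also have "{..<n} \<inter> h = h" using Hs[OF h] by auto
      finally show "(\<Sum>v<n. if v \<in> h then (1::nat) else 0) = r" using Hs[OF h] by simp
    qed
    also have "\<dots> = r * card H" by simp
    finally show ?thesis .
  qed
  define D where "D = (\<Sum>v<n. real (d v))"
  define Q where "Q = (\<Sum>v<n. real (d v) ^ 2)"
  define R where "R = real r - 1"
  have RR: "real (r - 1) = R" using r by (simp add: R_def of_nat_diff)
  have DH: "D = real r * real (card H)" unfolding D_def
    using arg_cong[OF dc, of real] by simp
  have "real (\<Sum>v<n. d v * ((d v - 1) * ((r - 1) * (r - 1)))) \<le> real (n * n * t)"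
    using low up by linarith
  moreover have "real (\<Sum>v<n. d v * ((d v - 1) * ((r - 1) * (r - 1)))) = R^2 * (Q - D)"
  proof -
    have "real (d v * ((d v - 1) * ((r - 1) * (r - 1)))) = R^2 * (real (d v) ^ 2 - real (d v))" for v
    proof (cases "d v = 0")
      case False
      then have "real (d v - 1) = real (d v) - 1" by (simp add: of_nat_diff)
      then have "real (d v * ((d v - 1) * ((r - 1) * (r - 1)))) = real (d v) * ((real (d v) - 1) * (R * R))"
        unfolding of_nat_mult RR by simp
      then show ?thesis by (simp add: power2_eq_square algebra_simps)
    qed simp
    then have "real (\<Sum>v<n. d v * ((d v - 1) * ((r - 1) * (r - 1)))) = (\<Sum>v<n. R^2 * (real (d v) ^ 2 - real (d v)))"
      unfolding of_nat_sum by (intro sum.cong refl) blast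
    also have "\<dots> = R^2 * (Q - D)" unfolding Q_def D_def
      by (simp only: sum_distrib_left[symmetric] sum_subtractf)
    finally show ?thesis .
  qed
  ultimately have h1: "R^2 * (Q - D) \<le> real t * real n ^ 2" by (simp add: power2_eq_square mult.commute)
  have h2: "D^2 \<le> real n * Q" unfolding D_def Q_def using cs_sum[of "{..<n}" "\<lambda>v. real (d v)"] by simp
  have Rp: "R > 0" using r by (simp add: R_def)
  have fin: "D - real n \<le> sqrt (real t) * (real n * sqrt (real n)) / R"
    by (rule real_final[OF Rp _ _ _ h1 h2]) (auto simp: D_def intro: sum_nonneg)
  have pw: "real n powr (3/2) = real n * sqrt (real n)"
  proof (cases "n = 0")
    case False
    have e: "(3/2::real) = 1 + 1/2" by simp
    have "real n powr (3/2) = real n powr (1 + 1/2)" by (subst e) (rule refl)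
    also have "\<dots> = real n * sqrt (real n)"
      unfolding powr_add using False by (simp add: powr_half_sqrt)
    finally show ?thesis .
  qed simp
  have rp: "real r > 0" using r by simp
  define P where "P = real n * sqrt (real n)"
  have "real r * real (card H) \<le> real n + sqrt (real t) * P / R"
    using fin unfolding DH P_def by simp
  then have "real (card H) \<le> (real n + sqrt (real t) * P / R) / real r"
    using rp by (simp add: pos_le_divide_eq mult.commute)
  also have "\<dots> = sqrt (real t) / (real r * R) * P + real n / real r"
    using rp Rp by (simp add: add_divide_distrib)
  finally show ?thesis unfolding pw P_def R_def .
qed
theorem theorem2p1:
  fixes r t n :: nat
  assumes "r \<ge> 3" and "t \<ge> 1"
  shows "real (ex_r r n {C2, C3, K2 (t + 1)})
           \<le> sqrt (real t) / (real r * (real r - 1)) * real n powr (3 / 2) + real n / real r"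
proof -
  define M where "M = {card H | H :: nat set set.
      uniform_hypergraph r {..<n} H \<and> family_free H {C2, C3, K2 (t + 1)}}"
  have "M \<subseteq> card ` Pow (Pow {..<n})"
    unfolding M_def uniform_hypergraph_def by auto
  then have finM: "finite M" by (rule finite_subset) auto
  have e0: "0 \<in> mg_edges G" if "G \<in> {C2, C3, K2 (t + 1)}" for G
    using that by (auto simp: C2_def C3_def K2_def mg_edges_def)
  have ff: "family_free ({} :: nat set set) {C2, C3, K2 (t + 1)}"
    unfolding family_free_def contains_berge_def using e0 by blast
  have "card ({} :: nat set set) \<in> M"
    unfolding M_def using ff by (intro CollectI exI[of _ "{}"]) (auto simp: uniform_hypergraph_def)
  then have "M \<noteq> {}" by auto
  from Max_in[OF finM this] obtain H where H: "Max M = card H" "uniform_hypergraph r {..<n} H"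
    "family_free H {C2, C3, K2 (t + 1)}" unfolding M_def by auto
  have "ex_r r n {C2, C3, K2 (t + 1)} = Max M" unfolding ex_r_def M_def by simp
  then show ?thesis using main_bound[OF assms H(2,3)] H(1) by simp
qed

end
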